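(* Let $\omega>0$, $c\in[0,1]$ and $H(q,p)=\frac12\omega^{-2}p^2+\frac12(\omega^2+1)q^2$. Let $\psi_h=\varphi^{(B)}_{h/2}\circ\varphi^{(A)}_h\circ\varphi^{(B)}_{h/2}$, where $\varphi^{(A)}_t$ is the flow of $\dot q=\omega^{-2}p,\ \dot p=-c^2\omega^2q$ and $\varphi^{(B)}_t$ the flow of $\dot q=0,\ \dot p=-((1-c^2)\omega^2+1)q$. If $h>0$ satisfies $$ch+2\arctan\!\Big(\frac{h(1+(1-c^2)\omega^2)}{2c\omega^2}\Big)<\pi\ \text{ if }c\in(0,1],\qquad h<\frac{2\omega}{\sqrt{1+\omega^2}}\ \text{ if }c=0,$$ then the integrator is stable (the powers of its one-step matrix are bounded). *)

theory Defs
  imports "HOL-Analysis.Analysis"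
begin

definition is_flow :: "(real \<Rightarrow> real \<times> real \<Rightarrow> real \<times> real) \<Rightarrow> (real \<times> real \<Rightarrow> real \<times> real) \<Rightarrow> bool" where
  "is_flow phi F \<longleftrightarrow>
     (\<forall>x. phi 0 x = x) \<and>
     (\<forall>x t. ((\<lambda>s. phi s x) has_vector_derivative F (phi t x)) (at t))"

definition field_A :: "real \<Rightarrow> real \<Rightarrow> real \<times> real \<Rightarrow> real \<times> real" where
  "field_A \<omega> c = (\<lambda>(q, p). (p / \<omega>\<^sup>2, - (c\<^sup>2 * \<omega>\<^sup>2) * q))"

definition field_B :: "real \<Rightarrow> real \<Rightarrow> real \<times> real \<Rightarrow> real \<times> real" where
  "field_B \<omega> c = (\<lambda>(q, p). (0, - ((1 - c\<^sup>2) * \<omega>\<^sup>2 + 1) * q))"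

definition strang :: "(real \<Rightarrow> real \<times> real \<Rightarrow> real \<times> real) \<Rightarrow> (real \<Rightarrow> real \<times> real \<Rightarrow> real \<times> real)
    \<Rightarrow> real \<Rightarrow> real \<times> real \<Rightarrow> real \<times> real" where
  "strang phiA phiB h = phiB (h/2) \<circ> phiA h \<circ> phiB (h/2)"

definition stable_map :: "(real \<times> real \<Rightarrow> real \<times> real) \<Rightarrow> bool" where
  "stable_map psi \<longleftrightarrow> (\<exists>C. \<forall>n x. norm ((psi ^^ n) x) \<le> C * norm x)"

end

theory Submission imports Defs begin

lemma comp_fst_deriv:
  fixes f :: "real \<Rightarrow> real \<times> real"
  assumes "(f has_vector_derivative v) (at t)"
  shows "((\<lambda>s. fst (f s)) has_real_derivative fst v) (at t)"
    and "((\<lambda>s. snd (f s)) has_real_derivative snd v) (at t)"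
proof -
  have "((\<lambda>s. fst (f s)) has_vector_derivative fst v) (at t)"
    by (rule bounded_linear.has_vector_derivative[OF bounded_linear_fst assms])
  then show "((\<lambda>s. fst (f s)) has_real_derivative fst v) (at t)"
    by (simp add: has_real_derivative_iff_has_vector_derivative)
  have "((\<lambda>s. snd (f s)) has_vector_derivative snd v) (at t)"
    by (rule bounded_linear.has_vector_derivative[OF bounded_linear_snd assms])
  then show "((\<lambda>s. snd (f s)) has_real_derivative snd v) (at t)"
    by (simp add: has_real_derivative_iff_has_vector_derivative)
qed

lemma psd2:
  fixes a b c x y :: real
  assumes "a \<ge> 0" "c \<ge> 0" "a * c \<ge> b^2"
  shows "a * x^2 + 2 * b * x * y + c * y^2 \<ge> 0"
proof (cases "a = 0")
  case True
  then have "b^2 \<le> 0" using assms by simp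
  then have "b = 0" by simp
  then show ?thesis using True assms by simp
next
  case False
  then have "a > 0" using assms by simp
  have "a * (a * x^2 + 2 * b * x * y + c * y^2) = (a*x + b*y)^2 + (a*c - b^2) * y^2"
    by (simp add: power2_eq_square algebra_simps)
  also have "\<dots> \<ge> 0" using assms by simp
  finally show ?thesis using \<open>a > 0\<close> by (simp add: zero_le_mult_iff)
qed

definition lin :: "real \<Rightarrow> real \<Rightarrow> real \<Rightarrow> real \<Rightarrow> real \<times> real \<Rightarrow> real \<times> real" where
  "lin a b c d = (\<lambda>(x, y). (a*x + b*y, c*x + d*y))"

lemma Q_inv:
  fixes a b c d x y :: real
  assumes "a*d - b*c = 1"
  shows "c*(a*x+b*y)^2 + (d-a)*(a*x+b*y)*(c*x+d*y) - b*(c*x+d*y)^2 = c*x^2 + (d-a)*x*y - b*y^2"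
proof -
  have "c*(a*x+b*y)^2 + (d-a)*(a*x+b*y)*(c*x+d*y) - b*(c*x+d*y)^2 = (a*d-b*c)*(c*x^2 + (d-a)*x*y - b*y^2)"
    by (simp add: power2_eq_square algebra_simps)
  then show ?thesis using assms by simp
qed

lemma quad_bounds:
  fixes \<alpha> \<beta> \<gamma> x y :: real
  assumes "\<alpha> > 0" "\<alpha> * \<gamma> > \<beta>^2"
  shows "(\<alpha>*\<gamma> - \<beta>^2)/(\<alpha>+\<gamma>) * (x^2+y^2) \<le> \<alpha>*x^2 + 2*\<beta>*x*y + \<gamma>*y^2"
    and "\<alpha>*x^2 + 2*\<beta>*x*y + \<gamma>*y^2 \<le> (\<alpha>+\<gamma>) * (x^2+y^2)"
proof -
  have g: "\<gamma> > 0"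
  proof (rule ccontr)
    assume "\<not> \<gamma> > 0"
    then have "\<alpha>*\<gamma> \<le> 0" using assms(1) by (simp add: mult_nonneg_nonpos)
    then show False using assms(2) by (smt (verit) zero_le_power2)
  qed
  define m where "m = (\<alpha>*\<gamma> - \<beta>^2)/(\<alpha>+\<gamma>)"
  have s: "\<alpha>+\<gamma> > 0" using g assms by simp
  have e1: "\<alpha> - m = (\<alpha>^2 + \<beta>^2)/(\<alpha>+\<gamma>)" using s unfolding m_def by (simp add: field_simps power2_eq_square)
  have e2: "\<gamma> - m = (\<gamma>^2 + \<beta>^2)/(\<alpha>+\<gamma>)" using s unfolding m_def by (simp add: field_simps power2_eq_square)
  have h1: "\<alpha> - m \<ge> 0" using e1 s by simp
  have h2: "\<gamma> - m \<ge> 0" using e2 s by simp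
  have A: "(\<alpha> - m)*(\<gamma> - m) = ((\<alpha>^2 + \<beta>^2)*(\<gamma>^2 + \<beta>^2))/(\<alpha>+\<gamma>)^2"
    unfolding e1 e2 by (simp add: power2_eq_square)
  have B2: "\<beta>^2*(\<alpha>+\<gamma>)^2/(\<alpha>+\<gamma>)^2 = \<beta>^2" using s by simp
  have N: "(\<alpha>^2 + \<beta>^2)*(\<gamma>^2 + \<beta>^2) - \<beta>^2*(\<alpha>+\<gamma>)^2 = (\<alpha>*\<gamma> - \<beta>^2)^2"
    by (simp add: power2_eq_square algebra_simps)
  have "(\<alpha> - m)*(\<gamma> - m) - \<beta>^2 = ((\<alpha>^2 + \<beta>^2)*(\<gamma>^2 + \<beta>^2))/(\<alpha>+\<gamma>)^2 - \<beta>^2*(\<alpha>+\<gamma>)^2/(\<alpha>+\<gamma>)^2"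
    using A B2 by simp
  also have "\<dots> = ((\<alpha>^2 + \<beta>^2)*(\<gamma>^2 + \<beta>^2) - \<beta>^2*(\<alpha>+\<gamma>)^2)/(\<alpha>+\<gamma>)^2"
    by (rule diff_divide_distrib[symmetric])
  also have "\<dots> = (\<alpha>*\<gamma> - \<beta>^2)^2/(\<alpha>+\<gamma>)^2" by (simp only: N)
  also have "\<dots> = m^2" unfolding m_def by (simp add: power_divide)
  finally have "(\<alpha> - m)*(\<gamma> - m) - \<beta>^2 = m^2" .
  then have h3: "(\<alpha> - m)*(\<gamma> - m) \<ge> \<beta>^2" by (smt (verit) zero_le_power2)
  from psd2[OF h1 h2 h3, of x y]
  show "m * (x^2+y^2) \<le> \<alpha>*x^2 + 2*\<beta>*x*y + \<gamma>*y^2" by (simp add: algebra_simps)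
  have "\<gamma> * \<alpha> \<ge> (-\<beta>)^2" using assms by (simp add: mult.commute)
  from psd2[OF _ _ this, of x y] g assms
  show "\<alpha>*x^2 + 2*\<beta>*x*y + \<gamma>*y^2 \<le> (\<alpha>+\<gamma>) * (x^2+y^2)" by (simp add: algebra_simps)
qed

lemma lin_funpow_Q:
  fixes a b c d :: real
  assumes "a*d - b*c = 1" and that: "\<And>x y. Qf (lin a b c d (x,y)) = Qf (x,y)"
  shows "Qf ((lin a b c d ^^ n) x) = Qf x"
  using that by (induction n) (simp_all add: surjective_pairing[symmetric], metis surjective_pairing)

lemma lin_stable:
  fixes a b c d :: real
  assumes det: "a*d - b*c = 1" and tr: "\<bar>a + d\<bar> < 2"
  shows "stable_map (lin a b c d)"
proof -
  have "(a+d)^2 < 2^2" using tr by (metis abs_of_nonneg pos2 power2_abs power_strict_mono abs_ge_zero less_eq_real_def)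
  then have bc: "b*c*4 + (d-a)^2 < 0" using det by (simp add: power2_eq_square algebra_simps)
  then have "b*c < 0" by (smt (verit) zero_le_power2)
  then have c0: "c \<noteq> 0" by auto
  define \<sigma> :: real where "\<sigma> = (if c > 0 then 1 else -1)"
  have s2: "\<sigma> * \<sigma> = 1" unfolding \<sigma>_def by simp
  define \<alpha> where "\<alpha> = \<sigma> * c"
  define \<beta> where "\<beta> = \<sigma> * (d-a)/2"
  define \<gamma> where "\<gamma> = - \<sigma> * b"
  define Qf where "Qf = (\<lambda>(x::real,y::real). \<alpha>*x^2 + 2*\<beta>*x*y + \<gamma>*y^2)"
  have ap: "\<alpha> > 0" unfolding \<alpha>_def \<sigma>_def using c0 by auto
  have "\<alpha>*\<gamma> - \<beta>^2 = (\<sigma>*\<sigma>) * (-b*c - (d-a)^2/4)"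
    unfolding \<alpha>_def \<beta>_def \<gamma>_def by (simp add: power2_eq_square algebra_simps)
  also have "\<dots> > 0" using s2 bc by simp
  finally have D: "\<alpha>*\<gamma> > \<beta>^2" by simp
  have Qeq: "Qf (x,y) = \<sigma> * (c*x^2 + (d-a)*x*y - b*y^2)" for x y
    unfolding Qf_def \<alpha>_def \<beta>_def \<gamma>_def by (simp add: field_simps)
  have inv: "Qf (lin a b c d (x,y)) = Qf (x,y)" for x y
    unfolding lin_def using Q_inv[OF det, of x y] by (simp add: Qeq)
  have inv2: "Qf ((lin a b c d ^^ n) z) = Qf z" for n z
    by (rule lin_funpow_Q[OF det inv])
  define m where "m = (\<alpha>*\<gamma> - \<beta>^2)/(\<alpha>+\<gamma>)"
  define K where "K = \<alpha>+\<gamma>"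
  have mp: "m > 0" unfolding m_def using D quad_bounds(2)[OF ap D, of 1 0] ap by simp
  have lo: "m * (x^2+y^2) \<le> Qf (x,y)" for x y using quad_bounds(1)[OF ap D] unfolding Qf_def m_def by simp
  have hi: "Qf (x,y) \<le> K * (x^2+y^2)" for x y using quad_bounds(2)[OF ap D] unfolding Qf_def K_def by simp
  have nsq: "norm z = sqrt ((fst z)^2 + (snd z)^2)" for z :: "real \<times> real"
    by (cases z) (simp add: norm_Pair)
  show ?thesis unfolding stable_map_def
  proof (intro exI allI)
    fix n x
    let ?y = "(lin a b c d ^^ n) x"
    have "m * ((fst ?y)^2 + (snd ?y)^2) \<le> Qf ?y" using lo[of "fst ?y" "snd ?y"] by simp
    also have "\<dots> = Qf x" by (rule inv2)
    also have "\<dots> \<le> K * ((fst x)^2 + (snd x)^2)" using hi[of "fst x" "snd x"] by simp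
    finally have "(fst ?y)^2 + (snd ?y)^2 \<le> (K/m) * ((fst x)^2 + (snd x)^2)"
      using mp by (simp add: field_simps)
    then have "sqrt ((fst ?y)^2 + (snd ?y)^2) \<le> sqrt (K/m) * sqrt ((fst x)^2 + (snd x)^2)"
      by (metis real_sqrt_le_mono real_sqrt_mult)
    then show "norm ?y \<le> sqrt (K/m) * norm x" by (simp add: nsq)
  qed
qed

lemma rot_inv:
  fixes Q P S Co W c :: real
  assumes "S^2 + Co^2 = 1" "W * c \<noteq> 0"
  shows "Q = (Q*Co - P/(W*c)*S) * Co + (W*c*Q*S + P*Co)/(W*c) * S"
    and "P = - (W*c) * (Q*Co - P/(W*c)*S) * S + (W*c*Q*S + P*Co) * Co"
proof -
  have "(Q*Co - P/(W*c)*S) * Co + (W*c*Q*S + P*Co)/(W*c) * S = Q * (S^2 + Co^2)"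
    using assms(2) by (simp add: field_simps power2_eq_square)
  then show "Q = (Q*Co - P/(W*c)*S) * Co + (W*c*Q*S + P*Co)/(W*c) * S" using assms(1) by simp
  have "- (W*c) * (Q*Co - P/(W*c)*S) * S + (W*c*Q*S + P*Co) * Co = P * (S^2 + Co^2)"
    using assms(2) by (simp add: field_simps power2_eq_square)
  then show "P = - (W*c) * (Q*Co - P/(W*c)*S) * S + (W*c*Q*S + P*Co) * Co" using assms(1) by simp
qed

lemma field_B_eq: "field_B \<omega> c z = (0, - ((1 - c\<^sup>2) * \<omega>\<^sup>2 + 1) * fst z)"
  by (cases z) (simp add: field_B_def)

lemma field_A_eq: "field_A \<omega> c z = (snd z / \<omega>\<^sup>2, - (c\<^sup>2 * \<omega>\<^sup>2) * fst z)"
  by (cases z) (simp add: field_A_def)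

lemma flow_B:
  assumes fl: "is_flow phi (field_B \<omega> c)"
  shows "phi t (q0, p0) = (q0, p0 - ((1 - c\<^sup>2) * \<omega>\<^sup>2 + 1) * t * q0)"
proof -
  define k where "k = (1 - c\<^sup>2) * \<omega>\<^sup>2 + 1"
  let ?x = "(q0, p0)"
  have d: "((\<lambda>s. phi s ?x) has_vector_derivative field_B \<omega> c (phi t ?x)) (at t)" for t
    using fl unfolding is_flow_def by blast
  have i0: "phi 0 ?x = ?x" using fl unfolding is_flow_def by blast
  have dq: "((\<lambda>s. fst (phi s ?x)) has_real_derivative 0) (at t)" for t
    using comp_fst_deriv(1)[OF d[of t]] by (simp add: field_B_eq)
  have q: "fst (phi t ?x) = q0" for t
    using DERIV_isconst_all[of "\<lambda>s. fst (phi s ?x)", OF allI[OF dq], of t 0] i0 by simp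
  have dp: "((\<lambda>s. snd (phi s ?x) + k * s * q0) has_real_derivative 0) (at t)" for t
  proof -
    have "((\<lambda>s. snd (phi s ?x)) has_real_derivative (- k * q0)) (at t)"
      using comp_fst_deriv(2)[OF d[of t]] by (simp add: field_B_eq q k_def)
    then show ?thesis by (auto intro!: derivative_eq_intros)
  qed
  have "snd (phi t ?x) + k * t * q0 = snd (phi 0 ?x) + k * 0 * q0"
    by (rule DERIV_isconst_all[OF allI[OF dp]])
  then have "snd (phi t ?x) = p0 - k * t * q0" using i0 by simp
  then show ?thesis using q[of t] unfolding k_def by (metis prod.collapse)
qed

lemma flow_A0:
  assumes fl: "is_flow phi (field_A \<omega> 0)"
  shows "phi t (q0, p0) = (q0 + t * p0 / \<omega>\<^sup>2, p0)"
proof -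
  let ?x = "(q0, p0)"
  have d: "((\<lambda>s. phi s ?x) has_vector_derivative field_A \<omega> 0 (phi t ?x)) (at t)" for t
    using fl unfolding is_flow_def by blast
  have i0: "phi 0 ?x = ?x" using fl unfolding is_flow_def by blast
  have dp: "((\<lambda>s. snd (phi s ?x)) has_real_derivative 0) (at t)" for t
    using comp_fst_deriv(2)[OF d[of t]] by (simp add: field_A_eq)
  have p: "snd (phi t ?x) = p0" for t
    using DERIV_isconst_all[of "\<lambda>s. snd (phi s ?x)", OF allI[OF dp], of t 0] i0 by simp
  define C where "C = p0 / \<omega>\<^sup>2"
  have dq: "((\<lambda>s. fst (phi s ?x) - s * C) has_real_derivative 0) (at t)" for t
  proof -
    have "((\<lambda>s. fst (phi s ?x)) has_real_derivative C) (at t)"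
      using comp_fst_deriv(1)[OF d[of t]] by (simp add: field_A_eq p C_def)
    then have "((\<lambda>s. fst (phi s ?x) - s * C) has_real_derivative (C - 1 * C)) (at t)"
      by (intro DERIV_diff DERIV_cmult_right DERIV_ident)
    then show ?thesis by simp
  qed
  have "fst (phi t ?x) - t * C = fst (phi 0 ?x) - 0 * C"
    by (rule DERIV_isconst_all[OF allI[OF dq]])
  then have "fst (phi t ?x) = q0 + t * p0 / \<omega>\<^sup>2" using i0 by (simp add: C_def)
  then show ?thesis using p[of t] by (metis prod.collapse)
qed

lemma flow_A:
  assumes fl: "is_flow phi (field_A \<omega> c)" and w: "\<omega> > 0" and c: "c > 0"
  shows "phi t (q0, p0) = (q0 * cos (c*t) + p0 / (\<omega>\<^sup>2 * c) * sin (c*t),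
                           - (\<omega>\<^sup>2 * c) * q0 * sin (c*t) + p0 * cos (c*t))"
proof -
  let ?x = "(q0, p0)"
  define q where "q = (\<lambda>s. fst (phi s ?x))"
  define p where "p = (\<lambda>s. snd (phi s ?x))"
  have d: "((\<lambda>s. phi s ?x) has_vector_derivative field_A \<omega> c (phi t ?x)) (at t)" for t
    using fl unfolding is_flow_def by blast
  have i0: "q 0 = q0" "p 0 = p0" using fl unfolding is_flow_def q_def p_def by auto
  have dq: "(q has_real_derivative (p t / \<omega>\<^sup>2)) (at t)" for t
    using comp_fst_deriv(1)[OF d[of t]] by (simp add: field_A_eq q_def p_def)
  have dp: "(p has_real_derivative (- (c\<^sup>2 * \<omega>\<^sup>2) * q t)) (at t)" for t
    using comp_fst_deriv(2)[OF d[of t]] by (simp add: field_A_eq q_def p_def)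
  have w2: "\<omega>\<^sup>2 > 0" using w by simp
  define f1 where "f1 = (\<lambda>u. q u * cos (c*u) - p u / (\<omega>\<^sup>2 * c) * sin (c*u))"
  define f2 where "f2 = (\<lambda>u. \<omega>\<^sup>2 * c * q u * sin (c*u) + p u * cos (c*u))"
  have d1: "(f1 has_real_derivative 0) (at t)" for t
    using w c unfolding f1_def
    by (auto intro!: derivative_eq_intros dq dp simp: field_simps power2_eq_square)
  have d2: "(f2 has_real_derivative 0) (at t)" for t
    using w c unfolding f2_def
    by (auto intro!: derivative_eq_intros dq dp simp: field_simps power2_eq_square)
  have e1: "f1 t = q0" using DERIV_isconst_all[of f1, OF allI[OF d1], of t 0] i0 by (simp add: f1_def)
  have e2: "f2 t = p0" using DERIV_isconst_all[of f2, OF allI[OF d2], of t 0] i0 by (simp add: f2_def)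
  have sc: "sin (c*t)^2 + cos (c*t)^2 = 1" by simp
  have wc: "\<omega>\<^sup>2 * c \<noteq> 0" using w c by simp
  have Q: "q t = q0 * cos (c*t) + p0 / (\<omega>\<^sup>2 * c) * sin (c*t)"
    unfolding e1[symmetric] e2[symmetric] f1_def f2_def
    by (rule rot_inv(1)[OF sc wc])
  have P: "p t = - (\<omega>\<^sup>2 * c) * q0 * sin (c*t) + p0 * cos (c*t)"
    unfolding e1[symmetric] e2[symmetric] f1_def f2_def
    by (rule rot_inv(2)[OF sc wc])
  show ?thesis using Q P unfolding q_def p_def by (metis prod.collapse)
qed

lemma trig_bound:
  fixes \<theta> \<tau> :: real
  assumes th: "\<theta> > 0" and ta: "\<tau> > 0" and cond: "\<theta> + 2 * arctan \<tau> < pi"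
  shows "\<bar>cos \<theta> - \<tau> * sin \<theta>\<bar> < 1"
proof -
  define \<phi> where "\<phi> = arctan \<tau>"
  have p0: "\<phi> > 0" unfolding \<phi>_def using ta by (simp add: zero_less_arctan_iff)
  have p1: "\<phi> < pi/2" unfolding \<phi>_def using arctan_bounded by blast
  have cp: "cos \<phi> > 0" using p0 p1 by (intro cos_gt_zero) auto
  have tt: "\<tau> = sin \<phi> / cos \<phi>" unfolding \<phi>_def by (metis tan_arctan tan_def)
  have eq: "cos \<theta> - \<tau> * sin \<theta> = cos (\<theta> + \<phi>) / cos \<phi>"
    using cp unfolding tt cos_add by (simp add: field_simps)
  have c1: "cos (\<theta> + \<phi>) < cos \<phi>"
    using th p0 cond unfolding \<phi>_def[symmetric] by (subst cos_mono_less_eq) auto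
  have c2: "cos (pi - \<phi>) < cos (\<theta> + \<phi>)"
    using th p0 p1 cond unfolding \<phi>_def[symmetric] by (subst cos_mono_less_eq) auto
  then have c2': "- cos \<phi> < cos (\<theta> + \<phi>)" by simp
  show ?thesis unfolding eq using c1 c2' cp by (simp add: abs_less_iff divide_less_eq less_divide_eq)
qed

theorem proposition9p2:
  fixes \<omega> c h :: real
    and phiA phiB :: "real \<Rightarrow> real \<times> real \<Rightarrow> real \<times> real"
  assumes "\<omega> > 0" and "0 \<le> c" and "c \<le> 1"
    and "is_flow phiA (field_A \<omega> c)"
    and "is_flow phiB (field_B \<omega> c)"
    and "h > 0"
    and "c > 0 \<Longrightarrow> c * h + 2 * arctan (h * (1 + (1 - c\<^sup>2) * \<omega>\<^sup>2) / (2 * c * \<omega>\<^sup>2)) < pi"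
    and "c = 0 \<Longrightarrow> h < 2 * \<omega> / sqrt (1 + \<omega>\<^sup>2)"
  shows "stable_map (strang phiA phiB h)"
proof -
  note w = assms(1)
  define k where "k = (1 - c\<^sup>2) * \<omega>\<^sup>2 + 1"
  define s where "s = h / 2"
  have kpos: "k > 0" unfolding k_def using assms(2,3)
    by (smt (verit) mult_nonneg_nonneg power_le_one zero_le_power2)
  have B: "phiB s = lin 1 0 (- k * s) 1"
    by (rule ext, clarify) (simp add: flow_B[OF assms(5)] lin_def k_def algebra_simps)
  have gen: "stable_map (strang phiA phiB h)"
    if A: "phiA h = lin \<alpha> \<beta> \<gamma> \<delta>" and det: "\<alpha>*\<delta> - \<beta>*\<gamma> = 1"
       and tr: "\<bar>\<alpha> + \<delta> - \<beta>*k*h\<bar> < 2" for \<alpha> \<beta> \<gamma> \<delta>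
  proof -
    have "strang phiA phiB h = lin (\<alpha> - \<beta>*k* s) \<beta> (-k* s*(\<alpha> - \<beta>*k* s) + \<gamma> - \<delta>*k* s) (\<delta> - k* s*\<beta>)"
      unfolding strang_def s_def[symmetric] B A
      by (rule ext, clarify) (simp add: lin_def algebra_simps)
    moreover have "(\<alpha> - \<beta>*k* s) * (\<delta> - k* s*\<beta>) - \<beta> * (-k* s*(\<alpha> - \<beta>*k* s) + \<gamma> - \<delta>*k* s) = 1"
      using det by (simp add: algebra_simps)
    moreover have "\<bar>(\<alpha> - \<beta>*k* s) + (\<delta> - k* s*\<beta>)\<bar> < 2"
      using tr unfolding s_def by (simp add: algebra_simps)
    ultimately show ?thesis using lin_stable by metis
  qed
  show ?thesis
  proof (cases "c = 0")
    case True
    have A: "phiA h = lin 1 (h / \<omega>\<^sup>2) 0 1"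
      using assms(4) unfolding True
      by (intro ext, clarify) (simp add: flow_A0 lin_def algebra_simps)
    have hk: "h^2 * (1 + \<omega>\<^sup>2) < 4 * \<omega>^2"
    proof -
      have sq: "sqrt (1 + \<omega>\<^sup>2) > 0" by (simp add: add_pos_nonneg)
      have "h * sqrt (1 + \<omega>\<^sup>2) < 2 * \<omega>" using assms(8)[OF True] sq by (simp add: less_divide_eq)
      moreover have "h * sqrt (1 + \<omega>\<^sup>2) \<ge> 0" using assms(6) by simp
      ultimately have "(h * sqrt (1 + \<omega>\<^sup>2))^2 < (2*\<omega>)^2"
        by (intro power_strict_mono) auto
      then show ?thesis by (simp add: power_mult_distrib)
    qed
    have k0: "k = 1 + \<omega>\<^sup>2" unfolding k_def True by simp
    have "\<bar>1 + 1 - h / \<omega>\<^sup>2 * k * h\<bar> < 2"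
    proof -
      have e: "h / \<omega>\<^sup>2 * k * h = h^2 * (1 + \<omega>\<^sup>2) / \<omega>^2" unfolding k0 by (simp add: power2_eq_square)
      have pos: "h^2 * (1 + \<omega>\<^sup>2) / \<omega>^2 > 0" using assms(6) w by (simp add: add_pos_nonneg)
      have lt: "h^2 * (1 + \<omega>\<^sup>2) / \<omega>^2 < 4" using hk w by (simp add: divide_less_eq)
      show ?thesis unfolding e using pos lt by linarith
    qed
    then show ?thesis by (intro gen[OF A]) simp_all
  next
    case False
    then have cp: "c > 0" using assms(2) by simp
    have A: "phiA h = lin (cos (c*h)) (sin (c*h) / (\<omega>\<^sup>2 * c)) (- (\<omega>\<^sup>2 * c) * sin (c*h)) (cos (c*h))"
      by (intro ext, clarify) (simp add: flow_A[OF assms(4) w cp] lin_def algebra_simps)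
    define \<tau> where "\<tau> = h * (1 + (1 - c\<^sup>2) * \<omega>\<^sup>2) / (2 * c * \<omega>\<^sup>2)"
    have tp: "\<tau> > 0" unfolding \<tau>_def using kpos cp w assms(6) unfolding k_def by simp
    have tb: "\<bar>cos (c*h) - \<tau> * sin (c*h)\<bar> < 1"
      by (rule trig_bound) (use cp assms(6) tp assms(7)[OF cp] in \<open>simp_all add: \<tau>_def mult.commute\<close>)
    have e: "cos (c*h) + cos (c*h) - sin (c*h) / (\<omega>\<^sup>2 * c) * k * h = 2 * (cos (c*h) - \<tau> * sin (c*h))"
      unfolding \<tau>_def k_def using cp w by (simp add: field_simps)
    have det: "cos (c*h) * cos (c*h) - sin (c*h) / (\<omega>\<^sup>2 * c) * (- (\<omega>\<^sup>2 * c) * sin (c*h)) = 1"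
      using cp w by (simp add: field_simps)
    show ?thesis by (rule gen[OF A det]) (simp only: e abs_mult, use tb in simp)
  qed
qed

end
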